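(* Let $S$ be an infinite set, viewed as a structure $\mathcal{S}$ in the empty signature (only equality), and let $I$ be the set of nonempty finite subsets of $S$, ordered by inclusion, each viewed as a substructure. Then $\lim_I\mathrm{Th}(F^* )=\mathrm{Th}(\mathcal{S}^* )$, where $F$ ranges over $I$.
   Context: For a structure $\mathcal{T}$ with universe $T$, $\mathrm{Th}(\mathcal{T}^* )$ is the set of first-order sentences (in pure equality logic) with a constant for each element of $T$ that are true in $\mathcal{T}$; these are regarded as subsets of the set of sentences with constants from $S$. For a family $\{\Delta_i\}_{i\in I}$ indexed by a directed set: $\limsup_I \Delta_i=\{\theta: \forall i\ \exists j\ge i\ [\theta\in\Delta_j]\}$, $\liminf_I \Delta_i=\{\theta: \exists i\ \forall j\ge i\ [\theta\in\Delta_j]\}$, and $\lim_I\Delta_i=\Delta$ means both equal $\Delta$. *)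

theory Defs
  imports Main
begin

datatype 'a trm = Var nat | Cst 'a

datatype 'a fm =
    FEq "'a trm" "'a trm"
  | FNeg "'a fm"
  | FConj "'a fm" "'a fm"
  | FDisj "'a fm" "'a fm"
  | FEx nat "'a fm"
  | FAll nat "'a fm"

fun tvars :: "'a trm \<Rightarrow> nat set" where
  "tvars (Var n) = {n}"
| "tvars (Cst c) = {}"

fun tconsts :: "'a trm \<Rightarrow> 'a set" where
  "tconsts (Var n) = {}"
| "tconsts (Cst c) = {c}"

fun freevars :: "'a fm \<Rightarrow> nat set" where
  "freevars (FEq s t) = tvars s \<union> tvars t"
| "freevars (FNeg p) = freevars p"
| "freevars (FConj p q) = freevars p \<union> freevars q"
| "freevars (FDisj p q) = freevars p \<union> freevars q"
| "freevars (FEx x p) = freevars p - {x}"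
| "freevars (FAll x p) = freevars p - {x}"

fun fm_consts :: "'a fm \<Rightarrow> 'a set" where
  "fm_consts (FEq s t) = tconsts s \<union> tconsts t"
| "fm_consts (FNeg p) = fm_consts p"
| "fm_consts (FConj p q) = fm_consts p \<union> fm_consts q"
| "fm_consts (FDisj p q) = fm_consts p \<union> fm_consts q"
| "fm_consts (FEx x p) = fm_consts p"
| "fm_consts (FAll x p) = fm_consts p"

definition sentence :: "'a fm \<Rightarrow> bool" where
  "sentence p \<longleftrightarrow> freevars p = {}"

fun tval :: "(nat \<Rightarrow> 'a) \<Rightarrow> 'a trm \<Rightarrow> 'a" where
  "tval v (Var n) = v n"
| "tval v (Cst c) = c"

fun sat :: "'a set \<Rightarrow> (nat \<Rightarrow> 'a) \<Rightarrow> 'a fm \<Rightarrow> bool" where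
  "sat M v (FEq s t) = (tval v s = tval v t)"
| "sat M v (FNeg p) = (\<not> sat M v p)"
| "sat M v (FConj p q) = (sat M v p \<and> sat M v q)"
| "sat M v (FDisj p q) = (sat M v p \<or> sat M v q)"
| "sat M v (FEx x p) = (\<exists>a\<in>M. sat M (v(x := a)) p)"
| "sat M v (FAll x p) = (\<forall>a\<in>M. sat M (v(x := a)) p)"

text \<open>Th(T*): sentences with constants from T true in the structure with universe T.\<close>
definition Th :: "'a set \<Rightarrow> 'a fm set" where
  "Th T = {p. sentence p \<and> fm_consts p \<subseteq> T \<and> (\<forall>v. (\<forall>n. v n \<in> T) \<longrightarrow> sat T v p)}"

definition lim_sup :: "'i set \<Rightarrow> ('i \<Rightarrow> 'i \<Rightarrow> bool) \<Rightarrow> ('i \<Rightarrow> 'b set) \<Rightarrow> 'b set" where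
  "lim_sup I le D = {t. \<forall>i\<in>I. \<exists>j\<in>I. le i j \<and> t \<in> D j}"

definition lim_inf :: "'i set \<Rightarrow> ('i \<Rightarrow> 'i \<Rightarrow> bool) \<Rightarrow> ('i \<Rightarrow> 'b set) \<Rightarrow> 'b set" where
  "lim_inf I le D = {t. \<exists>i\<in>I. \<forall>j\<in>I. le i j \<longrightarrow> t \<in> D j}"

definition has_lim :: "'i set \<Rightarrow> ('i \<Rightarrow> 'i \<Rightarrow> bool) \<Rightarrow> ('i \<Rightarrow> 'b set) \<Rightarrow> 'b set \<Rightarrow> bool" where
  "has_lim I le D L \<longleftrightarrow> lim_sup I le D = L \<and> lim_inf I le D = L"

end

theory Submission
  imports Defs
begin

fun qd :: "'a fm \<Rightarrow> nat" where
  "qd (FEq s t) = 0"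
| "qd (FNeg p) = qd p"
| "qd (FConj p q) = qd p + qd q"
| "qd (FDisj p q) = qd p + qd q"
| "qd (FEx x p) = Suc (qd p)"
| "qd (FAll x p) = Suc (qd p)"

lemma finite_consts: "finite (fm_consts p)"
proof (induction p)
  case (FEq s t) then show ?case by (cases s; cases t) auto
qed auto

lemma finite_fv: "finite (freevars p)"
proof (induction p)
  case (FEq s t) then show ?case by (cases s; cases t) auto
qed auto

lemma tval_pi:
  assumes "\<forall>y\<in>tvars s. w y = \<pi> (v y)" "\<forall>c\<in>tconsts s. \<pi> c = c"
  shows "tval w s = \<pi> (tval v s)"
  using assms by (cases s) auto

lemma sat_pi:
  assumes "\<And>z. \<pi> (\<pi> z) = z" "\<And>z. z \<in> S \<Longrightarrow> \<pi> z \<in> S"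
  shows "\<forall>c\<in>fm_consts p. \<pi> c = c \<Longrightarrow> \<forall>y\<in>freevars p. w y = \<pi> (v y) \<Longrightarrow> sat S w p = sat S v p"
proof (induction p arbitrary: v w)
  case (FEq s t)
  then have "tval w s = \<pi> (tval v s)" "tval w t = \<pi> (tval v t)"
    by (auto intro!: tval_pi)
  then show ?case using assms(1) by simp (metis)
next
  case (FEx x p)
  show ?case
  proof
    assume "sat S w (FEx x p)"
    then obtain a where a: "a \<in> S" "sat S (w(x:=a)) p" by auto
    have "sat S (w(x:=a)) p = sat S (v(x:=\<pi> a)) p"
      using FEx by (intro FEx.IH) (auto simp: assms(1))
    then show "sat S v (FEx x p)" using a assms(2) by auto
  next
    assume "sat S v (FEx x p)"
    then obtain a where a: "a \<in> S" "sat S (v(x:=a)) p" by auto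
    have "sat S (w(x:=\<pi> a)) p = sat S (v(x:=a)) p"
      using FEx by (intro FEx.IH) auto
    then show "sat S w (FEx x p)" using a assms(2) by auto
  qed
next
  case (FAll x p)
  show ?case
  proof
    assume h: "sat S w (FAll x p)"
    show "sat S v (FAll x p)"
    proof (simp, intro ballI)
      fix a assume a: "a \<in> S"
      have "sat S (w(x:=\<pi> a)) p = sat S (v(x:=a)) p"
        using FAll by (intro FAll.IH) auto
      then show "sat S (v(x:=a)) p" using h a assms(2) by auto
    qed
  next
    assume h: "sat S v (FAll x p)"
    show "sat S w (FAll x p)"
    proof (simp, intro ballI)
      fix a assume a: "a \<in> S"
      have "sat S (w(x:=a)) p = sat S (v(x:=\<pi> a)) p"
        using FAll by (intro FAll.IH) (auto simp: assms(1))
      then show "sat S (w(x:=a)) p" using h a assms(2) by auto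
    qed
  qed
next
  case (FConj p q)
  have "sat S w p = sat S v p" "sat S w q = sat S v q"
    using FConj.prems by (auto intro!: FConj.IH)
  then show ?case by simp
next
  case (FDisj p q)
  have "sat S w p = sat S v p" "sat S w q = sat S v q"
    using FDisj.prems by (auto intro!: FDisj.IH)
  then show ?case by simp
qed auto

lemma sat_agree:
  "\<forall>y\<in>freevars p. w y = v y \<Longrightarrow> sat S w p = sat S v p"
  using sat_pi[of id S p w v] by auto

definition sw :: "'a \<Rightarrow> 'a \<Rightarrow> 'a \<Rightarrow> 'a" where
  "sw a b z = (if z = a then b else if z = b then a else z)"

lemma swap_step:
  assumes "a \<in> S" "b \<in> S" "a \<notin> D" "b \<notin> D" "fm_consts p \<subseteq> D"
    "\<forall>y\<in>freevars p - {x}. v y \<in> D"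
  shows "sat S (v(x:=a)) p = sat S (v(x:=b)) p"
proof -
  have "sat S (v(x:=b)) p = sat S (v(x:=a)) p"
    apply (rule sat_pi[of "sw a b"])
    using assms by (auto simp: sw_def)
  then show ?thesis by simp
qed

lemma key:
  "finite F \<Longrightarrow> F \<subseteq> S \<Longrightarrow> fm_consts p \<subseteq> F \<Longrightarrow> \<forall>n. v n \<in> F \<Longrightarrow>
   card (fm_consts p \<union> v ` freevars p) + qd p \<le> card F \<Longrightarrow> sat F v p = sat S v p"
proof (induction p arbitrary: v)
  case (FNeg p) then show ?case by simp
next
  case (FConj p q)
  have "card (fm_consts p \<union> v ` freevars p) \<le> card (fm_consts (FConj p q) \<union> v ` freevars (FConj p q))"
   "card (fm_consts q \<union> v ` freevars q) \<le> card (fm_consts (FConj p q) \<union> v ` freevars (FConj p q))"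
    by (auto intro!: card_mono simp: finite_consts finite_fv)
  then show ?case using FConj by simp
next
  case (FDisj p q)
  have "card (fm_consts p \<union> v ` freevars p) \<le> card (fm_consts (FDisj p q) \<union> v ` freevars (FDisj p q))"
   "card (fm_consts q \<union> v ` freevars q) \<le> card (fm_consts (FDisj p q) \<union> v ` freevars (FDisj p q))"
    by (auto intro!: card_mono simp: finite_consts finite_fv)
  then show ?case using FDisj by simp
next
  case (FEx x p)
  define D where "D = fm_consts p \<union> v ` (freevars p - {x})"
  have fD: "finite D" by (simp add: D_def finite_consts finite_fv)
  have DF: "D \<subseteq> F" using FEx.prems by (auto simp: D_def)
  have cD: "card D + qd p + 1 \<le> card F" using FEx.prems(5) by (simp add: D_def)
  have IH: "sat F (v(x:=a)) p = sat S (v(x:=a)) p" if "a \<in> F" for a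
  proof (rule FEx.IH)
    have "fm_consts p \<union> (v(x:=a)) ` freevars p \<subseteq> insert a D" by (auto simp: D_def)
    then have "card (fm_consts p \<union> (v(x:=a)) ` freevars p) \<le> card (insert a D)"
      using fD by (intro card_mono) auto
    also have "\<dots> \<le> card D + 1" by (simp add: card_insert_le_m1 fD card_insert_if)
    finally show "card (fm_consts p \<union> (v(x:=a)) ` freevars p) + qd p \<le> card F" using cD by simp
  qed (use FEx.prems(1-4) that in auto)
  have lt: "card D < card F" using cD by simp
  have "\<not> F \<subseteq> D"
  proof
    assume "F \<subseteq> D"
    then have "card F \<le> card D" by (rule card_mono[OF fD])
    then show False using lt by simp
  qed
  then obtain b where b: "b \<in> F" "b \<notin> D" by blast
  show ?case
  proof
    assume "sat F v (FEx x p)"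
    then show "sat S v (FEx x p)" using IH FEx.prems(2) by auto
  next
    assume "sat S v (FEx x p)"
    then obtain a where a: "a \<in> S" "sat S (v(x:=a)) p" by auto
    show "sat F v (FEx x p)"
    proof (cases "a \<in> F")
      case True then show ?thesis using IH a by auto
    next
      case False
      have "sat S (v(x:=a)) p = sat S (v(x:=b)) p"
        by (rule swap_step[where D=D])
          (fact a(1), use b FEx.prems(2) in blast, use False DF in blast, fact b(2),
           simp add: D_def, simp add: D_def)
      then show ?thesis using IH b a by auto
    qed
  qed
next
  case (FAll x p)
  define D where "D = fm_consts p \<union> v ` (freevars p - {x})"
  have fD: "finite D" by (simp add: D_def finite_consts finite_fv)
  have DF: "D \<subseteq> F" using FAll.prems by (auto simp: D_def)
  have cD: "card D + qd p + 1 \<le> card F" using FAll.prems(5) by (simp add: D_def)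
  have IH: "sat F (v(x:=a)) p = sat S (v(x:=a)) p" if "a \<in> F" for a
  proof (rule FAll.IH)
    have "fm_consts p \<union> (v(x:=a)) ` freevars p \<subseteq> insert a D" by (auto simp: D_def)
    then have "card (fm_consts p \<union> (v(x:=a)) ` freevars p) \<le> card (insert a D)"
      using fD by (intro card_mono) auto
    also have "\<dots> \<le> card D + 1" by (simp add: card_insert_le_m1 fD card_insert_if)
    finally show "card (fm_consts p \<union> (v(x:=a)) ` freevars p) + qd p \<le> card F" using cD by simp
  qed (use FAll.prems(1-4) that in auto)
  have lt: "card D < card F" using cD by simp
  have "\<not> F \<subseteq> D"
  proof
    assume "F \<subseteq> D"
    then have "card F \<le> card D" by (rule card_mono[OF fD])
    then show False using lt by simp
  qed
  then obtain b where b: "b \<in> F" "b \<notin> D" by blast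
  show ?case
  proof
    assume h: "sat S v (FAll x p)"
    then show "sat F v (FAll x p)" using IH FAll.prems(2) by auto
  next
    assume h: "sat F v (FAll x p)"
    show "sat S v (FAll x p)"
    proof (simp, intro ballI)
      fix a assume a: "a \<in> S"
      show "sat S (v(x:=a)) p"
      proof (cases "a \<in> F")
        case True then show ?thesis using IH h by auto
      next
        case False
        have "sat S (v(x:=a)) p = sat S (v(x:=b)) p"
          by (rule swap_step[where D=D])
          (fact a(1), use b FAll.prems(2) in blast, use False DF in blast, fact b(2),
           simp add: D_def, simp add: D_def)
        then show ?thesis using IH b h by auto
      qed
    qed
  qed
qed simp

lemma big:
  assumes "finite F" "F \<subseteq> S" "F \<noteq> {}" "sentence p" "fm_consts p \<subseteq> F"
    "card (fm_consts p) + qd p \<le> card F"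
  shows "p \<in> Th F \<longleftrightarrow> p \<in> Th S"
proof -
  obtain c where c: "c \<in> F" using assms(3) by auto
  have fv: "freevars p = {}" using assms(4) by (simp add: sentence_def)
  have e: "sat F (\<lambda>_. c) p = sat S (\<lambda>_. c) p"
    by (rule key) (use assms c fv in auto)
  have "sat T v p = sat T (\<lambda>_. c) p" for T v using sat_agree[of p v "\<lambda>_. c"] fv by simp
  then show ?thesis using e assms c unfolding Th_def by auto
qed

lemma exists_big:
  assumes "infinite S" "finite G" "G \<subseteq> S"
  shows "\<exists>F. G \<subseteq> F \<and> F \<subseteq> S \<and> finite F \<and> F \<noteq> {} \<and> n \<le> card F"
proof -
  have "infinite (S - G)" using assms by simp
  then obtain X where X: "finite X" "card X = Suc n" "X \<subseteq> S - G"
    using infinite_arbitrarily_large by blast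
  have "card X \<le> card (G \<union> X)" using X assms by (intro card_mono) auto
  then show ?thesis using X assms by (intro exI[of _ "G \<union> X"]) auto
qed

theorem mainTheorem10:
  fixes S :: "'a set"
  assumes "infinite S"
  shows "has_lim {F. F \<subseteq> S \<and> finite F \<and> F \<noteq> {}} (\<subseteq>) Th (Th S)"
proof -
  let ?I = "{F. F \<subseteq> S \<and> finite F \<and> F \<noteq> {}}"
  have ThS: "fm_consts p \<subseteq> S" if "p \<in> Th S" for p using that by (simp add: Th_def)
  have ThF: "sentence p \<and> fm_consts p \<subseteq> F" if "p \<in> Th F" for p F using that by (simp add: Th_def)
  have bigF: "\<exists>F\<in>?I. G \<subseteq> F \<and> fm_consts p \<subseteq> F \<and> card (fm_consts p) + qd p \<le> card F"
    if "finite G" "G \<subseteq> S" "fm_consts p \<subseteq> S" for G p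
    using exists_big[OF assms, of "G \<union> fm_consts p" "card (fm_consts p) + qd p"] that finite_consts
    by auto
  have mono: "card (fm_consts p) + qd p \<le> card F'"
    if "card (fm_consts p) + qd p \<le> card F" "F \<subseteq> F'" "finite F'" for p :: "'a fm" and F F' :: "'a set"
    using card_mono[OF that(3,2)] that(1) by simp
  have sup: "lim_sup ?I (\<subseteq>) Th = Th S"
  proof (rule set_eqI, rule iffI)
    fix p assume "p \<in> lim_sup ?I (\<subseteq>) Th"
    then have h: "\<forall>i\<in>?I. \<exists>j\<in>?I. i \<subseteq> j \<and> p \<in> Th j" by (simp add: lim_sup_def)
    obtain s where "s \<in> S" using assms by (metis finite.emptyI ex_in_conv)
    then have "{s} \<in> ?I" by auto
    from bspec[OF h this] obtain j0 where "j0 \<in> ?I" "p \<in> Th j0" by blast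
    then have cS: "fm_consts p \<subseteq> S" using ThF by blast
    obtain i where i: "i \<in> ?I" "fm_consts p \<subseteq> i" "card (fm_consts p) + qd p \<le> card i"
      using bigF[of "{}" p] cS by auto
    from bspec[OF h i(1)] obtain j where j: "j \<in> ?I" "i \<subseteq> j" "p \<in> Th j" by blast
    have sp: "sentence p" using ThF[OF j(3)] by simp
    have "p \<in> Th j \<longleftrightarrow> p \<in> Th S"
      by (rule big) (use j i sp ThF[OF j(3)] mono[OF i(3) j(2)] in auto)
    then show "p \<in> Th S" using j by simp
  next
    fix p assume p: "p \<in> Th S"
    show "p \<in> lim_sup ?I (\<subseteq>) Th" unfolding lim_sup_def
    proof (simp, intro allI impI)
      fix i assume i: "i \<subseteq> S \<and> finite i \<and> i \<noteq> {}"
      obtain j where j: "j \<in> ?I" "i \<subseteq> j" "fm_consts p \<subseteq> j" "card (fm_consts p) + qd p \<le> card j"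
        using bigF[of i p] i ThS[OF p] by auto
      have "p \<in> Th j" using big[of j S p] j p by (auto simp: Th_def)
      then show "\<exists>j\<subseteq>S. finite j \<and> j \<noteq> {} \<and> i \<subseteq> j \<and> p \<in> Th j" using j by auto
    qed
  qed
  have inf: "lim_inf ?I (\<subseteq>) Th = Th S"
  proof (rule set_eqI, rule iffI)
    fix p assume "p \<in> lim_inf ?I (\<subseteq>) Th"
    then obtain i where i: "i \<in> ?I" "\<forall>j\<in>?I. i \<subseteq> j \<longrightarrow> p \<in> Th j" by (auto simp: lim_inf_def)
    then have "p \<in> Th i" by auto
    then have cS: "fm_consts p \<subseteq> S" using ThF i(1) by blast
    obtain j where j: "j \<in> ?I" "i \<subseteq> j" "fm_consts p \<subseteq> j" "card (fm_consts p) + qd p \<le> card j"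
      using bigF[of i p] i cS by auto
    have "p \<in> Th j" using i j by blast
    then show "p \<in> Th S" using big[of j S p] j ThF by blast
  next
    fix p assume p: "p \<in> Th S"
    obtain i where i: "i \<in> ?I" "fm_consts p \<subseteq> i" "card (fm_consts p) + qd p \<le> card i"
      using bigF[of "{}" p] ThS[OF p] by auto
    have "\<forall>j\<in>?I. i \<subseteq> j \<longrightarrow> p \<in> Th j"
    proof (intro ballI impI)
      fix j assume j: "j \<in> ?I" "i \<subseteq> j"
      have "sentence p" using p by (simp add: Th_def)
      have "p \<in> Th j \<longleftrightarrow> p \<in> Th S"
        by (rule big) (use j i \<open>sentence p\<close> mono[OF i(3) j(2)] in auto)
      then show "p \<in> Th j" using p by simp
    qed
    then show "p \<in> lim_inf ?I (\<subseteq>) Th" using i(1) unfolding lim_inf_def by blast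
  qed
  show ?thesis unfolding has_lim_def using sup inf by (rule conjI)
qed

end
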